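(* For any alphabet size $q\ge2$ and any $i\in\{1,2,\dots,q\}$, no infinite family of $q$-ary codes with rate bounded away from zero is list-decodable (with list size $2^{o(n)}$, $n$ the block length) from a $\delta=\frac{q-i}{q}$ fraction of deletions and a $\gamma=\frac{i(i-1)}{q}$ fraction of insertions.
   Context: A $q$-ary code of block length $n$ is $C\subseteq\Sigma^n$ with $|\Sigma|=q$, rate $\log_q|C|/n$. $C$ is $L$-list decodable from $\delta n$ deletions and $\gamma n$ insertions if every string $y$ can be obtained from at most $L$ codewords by at most $\delta n$ deletions and at most $\gamma n$ insertions (deleting symbols of the codeword and inserting arbitrary symbols at arbitrary positions). *)

theory Defs
  imports "HOL-Analysis.Analysis" "HOL-Library.Sublist"
begin

definition qary_words :: "nat \<Rightarrow> nat \<Rightarrow> nat list set" where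
  "qary_words q n = {w. length w = n \<and> set w \<subseteq> {..<q}}"

definition is_qary_code :: "nat \<Rightarrow> nat \<Rightarrow> nat list set \<Rightarrow> bool" where
  "is_qary_code q n C \<longleftrightarrow> C \<subseteq> qary_words q n"

definition code_rate :: "nat \<Rightarrow> nat \<Rightarrow> nat list set \<Rightarrow> real" where
  "code_rate q n C = log (real q) (real (card C)) / real n"

text \<open>y is obtainable from x by at most d deletions and at most e insertions:
  delete some symbols of x (giving a subsequence z of x), then insert symbols into z
  to get y (so z is a subsequence of y).\<close>
definition del_ins_reachable :: "real \<Rightarrow> real \<Rightarrow> 'a list \<Rightarrow> 'a list \<Rightarrow> bool" where
  "del_ins_reachable d e x y \<longleftrightarrow>
     (\<exists>z. subseq z x \<and> subseq z y \<and>
          real (length x - length z) \<le> d \<and> real (length y - length z) \<le> e)"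

definition list_decodable_insdel ::
  "nat \<Rightarrow> nat \<Rightarrow> nat list set \<Rightarrow> real \<Rightarrow> real \<Rightarrow> real \<Rightarrow> bool" where
  "list_decodable_insdel q n C L \<delta> \<gamma> \<longleftrightarrow>
     (\<forall>y. set y \<subseteq> {..<q} \<longrightarrow>
        real (card {c \<in> C. del_ins_reachable (\<delta> * real n) (\<gamma> * real n) c y}) \<le> L)"

end

theory Submission imports Defs "HOL-Real_Asymp.Real_Asymp" begin

definition per :: "nat list \<Rightarrow> nat \<Rightarrow> nat \<Rightarrow> nat list" where
  "per xs t len = map (\<lambda>j. xs ! ((t+j) mod length xs)) [0..<len]"

lemma per_add: "per xs t (d + l) = per xs t d @ per xs ((t+d) mod length xs) l"
proof -
  have e1: "[0..<d+l] = [0..<d] @ [d..<d+l]" using upt_add_eq_append[of 0 d l] by simp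
  have e2: "[d..<d+l] = map (\<lambda>j. j + d) [0..<l]" using map_add_upt[of d l] by (simp add: add.commute)
  have e3: "(t + (j + d)) mod length xs = ((t + d) mod length xs + j) mod length xs" for j
    by (metis add.assoc add.commute mod_add_left_eq)
  show ?thesis unfolding per_def e1 e2 by (simp add: e3)
qed

lemma per_set: "xs \<noteq> [] \<Longrightarrow> set (per xs t len) \<subseteq> set xs"
  unfolding per_def by auto

lemma embed:
  assumes "xs \<noteq> []" "z \<noteq> []" "set z \<subseteq> set xs"
  shows "\<exists>t<length xs. \<exists>len. len \<le> length xs * (length z - 1) + 1 \<and> subseq z (per xs t len)"
  using assms(2,3)
proof (induction z)
  case Nil then show ?case by simp
next
  case (Cons a z')
  define L where "L = length xs"
  have L0: "L > 0" using assms(1) by (simp add: L_def)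
  obtain t where t: "t < L" "xs ! t = a" using Cons.prems(2) by (auto simp: in_set_conv_nth L_def)
  show ?case
  proof (cases "z' = []")
    case True
    have "per xs t 1 = [a]" using t by (simp add: per_def L_def)
    then show ?thesis using True t
      by (intro exI[of _ t] conjI exI[of _ 1]) (auto simp: L_def)
  next
    case False
    then obtain t' len' where t': "t' < L" "len' \<le> L * (length z' - 1) + 1" "subseq z' (per xs t' len')"
      using Cons by (auto simp: L_def)
    define d where "d = (if t' > t then t' - t else t' + L - t)"
    have d1: "1 \<le> d" "d \<le> L" using t t' by (auto simp: d_def)
    have td: "(t + d) mod L = t'"
    proof (cases "t' > t")
      case True then show ?thesis using t' by (simp add: d_def)
    next
      case False
      then have "t + d = t' + L" using t by (simp add: d_def)
      then show ?thesis using t' by simp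
    qed
    obtain d' where dd: "d = Suc d'" using d1 by (cases d) auto
    have pd: "per xs t d = a # per xs (Suc t) d'"
      unfolding per_def dd using t by (simp only: map_upt_Suc) (simp add: L_def)
    have "per xs t (d + len') = a # (per xs (Suc t) d' @ per xs t' len')"
      using per_add[of xs t d len'] pd td by (simp add: L_def)
    moreover have "subseq (a # z') (a # (per xs (Suc t) d' @ per xs t' len'))"
      using t'(3) by (simp add: subseq_drop_many)
    moreover have "d + len' \<le> L * (length (a # z') - 1) + 1"
    proof -
      have "length z' \<ge> 1" using False by (cases z') auto
      then have "L * (length (a#z') - 1) = L * (length z' - 1) + L"
        by (cases "length z'") auto
      then show ?thesis using d1 t'(2) by simp
    qed
    ultimately show ?thesis using t
      by (intro exI[of _ t] conjI exI[of _ "d + len'"]) (auto simp: L_def)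
  qed
qed

definition win :: "nat \<Rightarrow> nat \<Rightarrow> nat \<Rightarrow> nat list" where
  "win q i j = map (\<lambda>k. (j+k) mod q) [0..<i]"

lemma win_card:
  assumes "x < q" "i \<le> q"
  shows "i \<le> card {j\<in>{..<q}. x \<in> set (win q i j)}"
proof -
  define g where "g k = (if k \<le> x then x - k else x + q - k)" for k
  have inj: "inj_on g {..<i}"
    unfolding inj_on_def g_def using assms by auto
  have sub: "g ` {..<i} \<subseteq> {j\<in>{..<q}. x \<in> set (win q i j)}"
  proof
    fix j assume "j \<in> g ` {..<i}"
    then obtain k where k: "k < i" "j = g k" by auto
    have "j < q" using k assms by (auto simp: g_def)
    moreover have "(j + k) mod q = x"
    proof (cases "k \<le> x")
      case True then show ?thesis using k assms by (simp add: g_def)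
    next
      case False
      then have "j + k = x + q" using k assms by (simp add: g_def)
      then show ?thesis using assms by simp
    qed
    ultimately show "j \<in> {j\<in>{..<q}. x \<in> set (win q i j)}"
      using k by (force simp: win_def)
  qed
  have "i = card (g ` {..<i})" using card_image[OF inj] by simp
  also have "\<dots> \<le> card {j\<in>{..<q}. x \<in> set (win q i j)}"
    by (rule card_mono[OF _ sub]) simp
  finally show ?thesis .
qed

lemma sum_ge:
  assumes "set c \<subseteq> {..<q}" "i \<le> q"
  shows "i * length c \<le> (\<Sum>j<q. length (filter (\<lambda>x. x \<in> set (win q i j)) c))"
  using assms(1)
proof (induction c)
  case Nil then show ?case by simp
next
  case (Cons x c)
  have "(\<Sum>j<q. length (filter (\<lambda>y. y \<in> set (win q i j)) (x#c)))
     = (\<Sum>j<q. (if x \<in> set (win q i j) then 1 else 0)) + (\<Sum>j<q. length (filter (\<lambda>y. y \<in> set (win q i j)) c))"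
    by (subst sum.distrib[symmetric]) (rule sum.cong; simp)
  also have "(\<Sum>j<q. (if x \<in> set (win q i j) then 1 else 0)) = card {j\<in>{..<q}. x \<in> set (win q i j)}"
    by (simp add: sum.inter_filter[symmetric])
  finally show ?case using Cons win_card[of x q i] assms(2) by simp
qed

lemma pigeon:
  fixes f :: "nat \<Rightarrow> nat"
  assumes "q > 0" "A \<le> (\<Sum>j<q. f j)"
  shows "\<exists>j<q. A \<le> q * f j"
proof (rule ccontr)
  assume "\<not> ?thesis"
  then have "\<forall>j<q. q * f j < A" by auto
  then have "(\<Sum>j<q. q * f j) < (\<Sum>j<q. A)"
    using assms(1) by (intro sum_strict_mono) auto
  then have "q * (\<Sum>j<q. f j) < q * A" by (simp add: sum_distrib_left)
  then show False using assms by (metis mult_le_mono2 not_le)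
qed

definition Yset :: "nat \<Rightarrow> nat \<Rightarrow> nat \<Rightarrow> nat list set" where
  "Yset q i n = (\<lambda>(j,t,len). per (win q i j) t len) ` ({..<q} \<times> {..<i} \<times> {..i*n})"

lemma card_Yset: "card (Yset q i n) \<le> q * i * (i*n+1)"
proof -
  have "card (Yset q i n) \<le> card ({..<q} \<times> {..<i} \<times> {..i*n})"
    unfolding Yset_def by (rule card_image_le) simp
  also have "\<dots> = q * i * (i*n+1)" by (simp add: card_cartesian_product algebra_simps)
  finally show ?thesis .
qed

lemma Yset_words: "y \<in> Yset q i n \<Longrightarrow> 1 \<le> i \<Longrightarrow> q > 0 \<Longrightarrow> set y \<subseteq> {..<q}"
  unfolding Yset_def per_def win_def by auto

lemma codeword_reach:
  assumes c: "set c \<subseteq> {..<q}" "length c = n" and n: "n \<ge> 1" and i: "1 \<le> i" "i \<le> q"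
  shows "\<exists>y\<in>Yset q i n. del_ins_reachable (real (q - i) / real q * real n)
            (real (i * (i - 1)) / real q * real n) c y"
proof -
  have q0: "q > 0" using i by simp
  obtain j where j: "j < q" "i * n \<le> q * length (filter (\<lambda>x. x \<in> set (win q i j)) c)"
    using pigeon[OF q0 sum_ge[OF c(1) i(2)]] c(2) by auto
  define f where "f = filter (\<lambda>x. x \<in> set (win q i j)) c"
  define m where "m = (i*n + q - 1) div q"
  have meq: "i*n + q - 1 = q * m + (i*n+q-1) mod q" unfolding m_def by simp
  have m1: "q * m \<le> i*n + q - 1" using meq by linarith
  have m2: "i*n + q - 1 < q * m + q"
  proof -
    have "(i*n+q-1) mod q < q" using q0 by simp
    then show ?thesis using meq by linarith
  qed
  have in1: "i * n \<ge> 1" using i n by simp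
  have "q * m \<ge> i * n" using m2 in1 by linarith
  have "i*n \<le> q * length f" using j f_def by simp
  have mf: "m \<le> length f"
  proof (rule ccontr)
    assume "\<not> ?thesis"
    then have "length f + 1 \<le> m" by simp
    then have "q * (length f + 1) \<le> q * m" by (rule mult_le_mono2)
    then show False using m1 \<open>i*n \<le> q * length f\<close> q0 by simp
  qed
  have mn: "m \<le> n"
  proof (rule ccontr)
    assume "\<not> ?thesis"
    then have "n + 1 \<le> m" by simp
    then have "q * (n + 1) \<le> q * m" by (rule mult_le_mono2)
    moreover have "i * n \<le> q * n" using i(2) by (rule mult_le_mono1)
    moreover have "q * (n + 1) = q * n + q" by simp
    ultimately show False using m1 q0 by linarith
  qed
  have mpos: "m \<ge> 1"
  proof (rule ccontr)
    assume "\<not> ?thesis" then have "m = 0" by simp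
    then show False using \<open>q * m \<ge> i * n\<close> in1 by simp
  qed
  have qm1: "q * (m - 1) \<le> i * n"
  proof -
    have "q * (m - 1) = q * m - q" by (simp add: right_diff_distrib')
    then show ?thesis using m1 by linarith
  qed
  define z where "z = take m f"
  have zc: "subseq z c"
  proof -
    have "subseq z f" unfolding z_def
      by (metis append_take_drop_id subseq_order.order_refl subseq_rev_drop_many)
    then show ?thesis using subseq_filter_left f_def subseq_order.order_trans by blast
  qed
  have lz: "length z = m" using mf by (simp add: z_def)
  have zne: "z \<noteq> []" using lz mpos by auto
  have zset: "set z \<subseteq> set (win q i j)" unfolding z_def f_def
    using set_take_subset by fastforce
  have wne: "win q i j \<noteq> []" using i by (simp add: win_def)
  have lw: "length (win q i j) = i" by (simp add: win_def)
  obtain t len where tl: "t < i" "len \<le> i * (m - 1) + 1" "subseq z (per (win q i j) t len)"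
    using embed[OF wne zne zset] lw lz by auto
  define y where "y = per (win q i j) t len"
  have ly: "length y = len" by (simp add: y_def per_def)
  have "i * (m - 1) + 1 \<le> i * n"
  proof -
    have "m - 1 \<le> n - 1" using mn by simp
    then have "i * (m-1) \<le> i * (n - 1)" by (rule mult_le_mono2)
    also have "\<dots> = i * n - i" by (simp add: right_diff_distrib')
    finally show ?thesis using i in1 by linarith
  qed
  then have "y \<in> Yset q i n" unfolding Yset_def y_def using j tl by force
  moreover have "del_ins_reachable (real (q - i) / real q * real n)
            (real (i * (i - 1)) / real q * real n) c y"
    unfolding del_ins_reachable_def
  proof (intro exI conjI)
    show "subseq z c" by fact
    show "subseq z y" using tl y_def by simp
    have "q * (n - m) \<le> (q - i) * n"
      using \<open>q * m \<ge> i * n\<close> by (simp add: diff_mult_distrib diff_mult_distrib2)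
    then have "real q * real (n - m) \<le> real (q - i) * real n"
      by (metis of_nat_le_iff of_nat_mult)
    then show "real (length c - length z) \<le> real (q - i) / real q * real n"
      using q0 c(2) lz by (simp add: field_simps)
    have "len - m \<le> (i - 1) * (m - 1)"
      using tl(2) mpos i by (simp add: diff_mult_distrib diff_mult_distrib2)
    then have "q * (len - m) \<le> q * ((i - 1) * (m - 1))" by simp
    also have "\<dots> = (i - 1) * (q * (m - 1))" by simp
    also have "\<dots> \<le> (i - 1) * (i * n)" using qm1 by simp
    finally have "q * (len - m) \<le> i * (i - 1) * n" by (simp add: algebra_simps)
    then have "real q * real (len - m) \<le> real (i * (i - 1)) * real n"
      by (metis of_nat_le_iff of_nat_mult)
    then show "real (length y - length z) \<le> real (i * (i - 1)) / real q * real n"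
      using q0 ly lz by (simp add: field_simps)
  qed
  ultimately show ?thesis by blast
qed


lemma asym:
  fixes R q :: real assumes "R > 0"
  shows "((\<lambda>n::nat. q * (q * real n + 1) * q / 2 powr (R/2*real n)) \<longlongrightarrow> 0) at_top"
  using assms by real_asymp

theorem theorem5p1:
  fixes q i :: nat and N :: "nat set" and C :: "nat \<Rightarrow> nat list set"
    and L :: "nat \<Rightarrow> real" and R :: real
  assumes "q \<ge> 2" and "1 \<le> i" and "i \<le> q"
    and "infinite N"
    and "R > 0"
    and "\<forall>\<epsilon>>0. \<exists>n0. \<forall>n\<in>N. n \<ge> n0 \<longrightarrow> L n \<le> 2 powr (\<epsilon> * real n)"
  shows "\<not> (\<forall>n\<in>N. is_qary_code q n (C n) \<and> code_rate q n (C n) \<ge> R \<and>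
              list_decodable_insdel q n (C n) (L n)
                 (real (q - i) / real q) (real (i * (i - 1)) / real q))"
proof
  assume H: "\<forall>n\<in>N. is_qary_code q n (C n) \<and> code_rate q n (C n) \<ge> R \<and>
              list_decodable_insdel q n (C n) (L n)
                 (real (q - i) / real q) (real (i * (i - 1)) / real q)"
  have q0: "q > 0" using assms(1) by simp
  obtain n0 where n0: "\<forall>n\<in>N. n \<ge> n0 \<longrightarrow> L n \<le> 2 powr (R/2 * real n)"
    using assms(6) assms(5) by (metis half_gt_zero)
  have "eventually (\<lambda>n::nat. real q * (real q * real n + 1) * real q / 2 powr (R/2*real n) < 1) at_top"
    using asym[OF assms(5), of "real q"] by (rule order_tendstoD) simp
  then obtain M where M: "\<And>n. n \<ge> M \<Longrightarrow> real q * (real q * real n + 1) * real q / 2 powr (R/2*real n) < 1"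
    by (auto simp: eventually_at_top_linorder)
  obtain n where n: "n \<in> N" "n \<ge> max (max n0 M) 1"
    using assms(4) by (meson infinite_nat_iff_unbounded_le)
  have n1: "n \<ge> 1" using n by simp
  have Hn: "is_qary_code q n (C n)" "code_rate q n (C n) \<ge> R"
     "list_decodable_insdel q n (C n) (L n) (real (q - i) / real q) (real (i * (i - 1)) / real q)"
    using H n(1) by auto
  have Csub: "C n \<subseteq> qary_words q n" using Hn(1) by (simp add: is_qary_code_def)
  have finW: "finite (qary_words q n)"
  proof -
    have "qary_words q n \<subseteq> {w. set w \<subseteq> {..<q} \<and> length w = n}" by (auto simp: qary_words_def)
    moreover have "finite {w. set w \<subseteq> {..<q} \<and> length w = n}" by (rule finite_lists_length_eq) simp
    ultimately show ?thesis by (rule finite_subset)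
  qed
  have finC: "finite (C n)" using Csub finW finite_subset by blast
  have rate: "log (real q) (real (card (C n))) \<ge> R * real n"
    using Hn(2) n1 by (simp add: code_rate_def field_simps)
  have cpos: "card (C n) > 0"
  proof (rule ccontr)
    assume "\<not> ?thesis"
    then have "log (real q) (real (card (C n))) = 0" by (simp add: log_def)
    then show False using rate assms(5) n1 by (smt (verit) of_nat_0_less_iff less_le_trans mult_pos_pos zero_less_one le_numeral_extra(2) of_nat_1 of_nat_le_iff)
  qed
  have lower: "2 powr (R * real n) \<le> real (card (C n))"
  proof -
    have "2 powr (R * real n) \<le> real q powr (R * real n)"
      using assms(1,5) by (intro powr_mono2) auto
    also have "\<dots> \<le> real q powr (log (real q) (real (card (C n))))"
      using rate assms(1) by (intro powr_mono) auto
    also have "\<dots> = real (card (C n))" using cpos assms(1) by simp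
    finally show ?thesis .
  qed
  define A where "A y = {c \<in> C n. del_ins_reachable (real (q - i) / real q * real n)
            (real (i * (i - 1)) / real q * real n) c y}" for y
  have cov: "C n \<subseteq> (\<Union>y\<in>Yset q i n. A y)"
  proof
    fix c assume c: "c \<in> C n"
    then have "set c \<subseteq> {..<q}" "length c = n" using Csub by (auto simp: qary_words_def)
    then obtain y where "y \<in> Yset q i n" "del_ins_reachable (real (q - i) / real q * real n)
            (real (i * (i - 1)) / real q * real n) c y"
      using codeword_reach n1 assms(2,3) by blast
    then show "c \<in> (\<Union>y\<in>Yset q i n. A y)" using c by (auto simp: A_def)
  qed
  have Aub: "real (card (A y)) \<le> L n" if "y \<in> Yset q i n" for y
  proof -
    have "set y \<subseteq> {..<q}" using Yset_words[OF that assms(2) q0] .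
    then show ?thesis using Hn(3) unfolding list_decodable_insdel_def A_def by auto
  qed
  have L0: "L n \<ge> 0"
    using Hn(3) unfolding list_decodable_insdel_def by (metis empty_subsetI list.set(1) of_nat_0_le_iff order_trans)
  have finY: "finite (Yset q i n)" unfolding Yset_def by simp
  have "real (card (C n)) \<le> real (card (\<Union>y\<in>Yset q i n. A y))"
    using cov finY finC by (intro of_nat_mono card_mono) (auto simp: A_def)
  also have "\<dots> \<le> real (\<Sum>y\<in>Yset q i n. card (A y))"
    by (intro of_nat_mono card_UN_le finY)
  also have "\<dots> = (\<Sum>y\<in>Yset q i n. real (card (A y)))" by simp
  also have "\<dots> \<le> real (card (Yset q i n)) * L n"
    using Aub by (intro sum_bounded_above) auto
  also have "\<dots> \<le> real (q * i * (i*n+1)) * L n"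
    by (rule mult_right_mono[OF of_nat_mono[OF card_Yset] L0])
  also have "\<dots> \<le> real q * (real q * real n + 1) * real q * L n"
  proof -
    have "q * i * (i*n+1) \<le> q * (q * n + 1) * q"
    proof -
      have "i*n+1 \<le> q*n+1" using assms(3) by simp
      then have "i * (i*n+1) \<le> q * (q*n+1)" using assms(3) by (intro mult_le_mono) auto
      then have hh: "q * (i * (i*n+1)) \<le> q * (q * (q*n+1))" by (rule mult_le_mono2)
      have e1: "q*i*(i*n+1) = q*(i*(i*n+1))" by (rule mult.assoc)
      have e2: "q*(q*n+1)*q = q*(q*(q*n+1))" by (rule mult.commute)
      show ?thesis unfolding e1 e2 by (rule hh)
    qed
    then have "real (q * i * (i*n+1)) \<le> real (q * (q * n + 1) * q)" by (rule of_nat_mono)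
    then have "real (q * i * (i*n+1)) \<le> real q * (real q * real n + 1) * real q"
      by (simp only: of_nat_mult of_nat_add of_nat_1)
    then show ?thesis using L0 by (intro mult_right_mono) auto
  qed
  also have "\<dots> \<le> real q * (real q * real n + 1) * real q * 2 powr (R/2 * real n)"
    using n0 n by (intro mult_left_mono) auto
  finally have up: "2 powr (R * real n) \<le> real q * (real q * real n + 1) * real q * 2 powr (R/2 * real n)"
    using lower by linarith
  have pp: "2 powr (R/2*real n) > 0" by simp
  have "n \<ge> M" using n(2) by simp
  then have "real q * (real q * real n + 1) * real q / 2 powr (R/2*real n) < 1" by (rule M)
  then have "real q * (real q * real n + 1) * real q < 2 powr (R/2*real n)"
    using pp by (simp only: divide_less_eq) simp
  then have "real q * (real q * real n + 1) * real q * 2 powr (R/2 * real n)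
      < 2 powr (R/2*real n) * 2 powr (R/2 * real n)"
    by (intro mult_strict_right_mono) auto
  also have "\<dots> = 2 powr (R/2*real n + R/2*real n)" by (rule powr_add[symmetric])
  also have "\<dots> = 2 powr (R * real n)" by simp
  finally show False using up by linarith
qed

end
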